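(* Consider the polymer model with polymer length $2p$, $p\in\mathbb N$, and potential value $v>0$, and suppose $\mathfrak p<1$. Then for almost every $(\omega,\ell)$ (with respect to $\mu_0\otimes(\text{uniform measure on }\{0,\dots,2p-1\})$) and every $k\in[p]$, $$\mathrm{dist}\Big(2\cos\Big(\frac{\pi k}{p+1}\Big),\ \mathrm{spec}\,H(\omega,\ell)\Big)\le 18\,\frac{k}{p^{3/2}}.$$
   Context: Polymer model: Let $\Omega=\{+1,-1\}^{\mathbb Z}$ with the left shift, and $\mu_0$ a shift-invariant ergodic probability measure on $\Omega$; set $\mathfrak p:=\mu_0(\{\omega:\omega_0=-1\})$. Define the blocks $\hat v_+=(0,\dots,0,-v,\dots,-v)\in\mathbb R^{2p}$ ($p$ zeros followed by $p$ entries $-v$) and $\hat v_-=(-v,\dots,-v)\in\mathbb R^{2p}$, with entries indexed by $m\in\{0,\dots,2p-1\}$. For $\omega\in\Omega$ and $\ell\in\{0,\dots,2p-1\}$ define the potential $V_n(\omega,\ell):=\hat v_{\omega_j}(m)$, where $n+\ell=2pj+m$ with $j\in\mathbb Z$, $m\in\{0,\dots,2p-1\}$ (so the potential is a concatenation of blocks $\hat v_{\omega_j}$ with random offset $\ell$). $H(\omega,\ell)$ is the bounded self-adjoint operator on $\ell^2(\mathbb Z)$ given by $(H\psi)_n=\psi_{n+1}+\psi_{n-1}+V_n(\omega,\ell)\psi_n$. *)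

theory Defs
  imports "HOL-Probability.Probability"
begin

definition Omega_M :: "(int \<Rightarrow> int) measure" where
  "Omega_M = PiM UNIV (\<lambda>_. count_space {-1, 1})"

definition shift :: "(int \<Rightarrow> int) \<Rightarrow> (int \<Rightarrow> int)" where
  "shift \<omega> = (\<lambda>j. \<omega> (j + 1))"

definition shift_invariant :: "(int \<Rightarrow> int) measure \<Rightarrow> bool" where
  "shift_invariant M \<longleftrightarrow> shift \<in> measurable M M \<and> distr M M shift = M"

definition shift_ergodic :: "(int \<Rightarrow> int) measure \<Rightarrow> bool" where
  "shift_ergodic M \<longleftrightarrow>
     (\<forall>A \<in> sets M. shift -` A \<inter> space M = A \<longrightarrow> measure M A = 0 \<or> measure M A = 1)"

definition vblock :: "nat \<Rightarrow> real \<Rightarrow> int \<Rightarrow> int \<Rightarrow> real" where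
  "vblock p v s m = (if s = 1 then (if m < int p then 0 else - v) else - v)"

text \<open>V_n(omega,l) = hat v_{omega_j}(m) where n + l = 2 p j + m, 0 \<le> m < 2p.\<close>
definition polymer_V :: "nat \<Rightarrow> real \<Rightarrow> (int \<Rightarrow> int) \<Rightarrow> int \<Rightarrow> int \<Rightarrow> real" where
  "polymer_V p v \<omega> l n =
     vblock p v (\<omega> ((n + l) div (2 * int p))) ((n + l) mod (2 * int p))"

definition polymer_H :: "nat \<Rightarrow> real \<Rightarrow> (int \<Rightarrow> int) \<Rightarrow> int \<Rightarrow> (int \<Rightarrow> complex) \<Rightarrow> (int \<Rightarrow> complex)" where
  "polymer_H p v \<omega> l \<psi> = (\<lambda>n. \<psi> (n + 1) + \<psi> (n - 1) + complex_of_real (polymer_V p v \<omega> l n) * \<psi> n)"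

definition l2Z :: "(int \<Rightarrow> complex) set" where
  "l2Z = {\<psi>. (\<lambda>n. (cmod (\<psi> n))\<^sup>2) summable_on UNIV}"

text \<open>Spectrum of an operator T (bounded on l^2(Z)): the set of z for which T - z is not a
  bijection of l^2(Z) onto itself (bounded inverse then follows from the open mapping theorem).\<close>
definition spec_l2 :: "((int \<Rightarrow> complex) \<Rightarrow> (int \<Rightarrow> complex)) \<Rightarrow> complex set" where
  "spec_l2 T = {z. \<not> bij_betw (\<lambda>\<psi>. \<lambda>n. T \<psi> n - z * \<psi> n) l2Z l2Z}"

end

theory Submission
  imports Defs
begin


definition ns :: "(int \<Rightarrow> complex) \<Rightarrow> real" where
  "ns f = infsum (\<lambda>n. (cmod (f n))\<^sup>2) UNIV"

lemma l2Z_iff: "f \<in> l2Z \<longleftrightarrow> (\<lambda>n. (cmod (f n))\<^sup>2) summable_on UNIV"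
  by (simp add: l2Z_def)

lemma l2Z_zero[simp]: "(\<lambda>_. 0) \<in> l2Z"
  by (simp add: l2Z_def)

lemma l2Z_cmp:
  assumes "f \<in> l2Z" "\<And>n. (cmod (g n))\<^sup>2 \<le> c * (cmod (f n))\<^sup>2"
  shows "g \<in> l2Z"
proof -
  have "(\<lambda>n. c * (cmod (f n))\<^sup>2) summable_on UNIV"
    using assms(1) by (simp add: l2Z_iff summable_on_cmult_right)
  then show ?thesis unfolding l2Z_iff
    by (rule summable_on_comparison_test) (use assms(2) in auto)
qed

lemma cmod_add_sq: "(cmod (a + b))\<^sup>2 \<le> 2 * ((cmod a)\<^sup>2 + (cmod b)\<^sup>2)"
proof -
  have "cmod (a+b) \<le> cmod a + cmod b" by (rule norm_triangle_ineq)
  then have "(cmod (a + b))\<^sup>2 \<le> (cmod a + cmod b)\<^sup>2"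
    by (simp add: power_mono)
  also have "\<dots> \<le> 2 * ((cmod a)\<^sup>2 + (cmod b)\<^sup>2)"
    using zero_le_power2[of "cmod a - cmod b"] by (simp add: power2_diff power2_sum)
  finally show ?thesis .
qed

lemma l2Z_add: assumes "f \<in> l2Z" "g \<in> l2Z" shows "(\<lambda>n. f n + g n) \<in> l2Z"
proof -
  have "(\<lambda>n. 2 * ((cmod (f n))\<^sup>2 + (cmod (g n))\<^sup>2)) summable_on UNIV"
    using assms by (intro summable_on_cmult_right summable_on_add) (auto simp: l2Z_iff)
  then show ?thesis unfolding l2Z_iff
    by (rule summable_on_comparison_test) (use cmod_add_sq in auto)
qed

lemma l2Z_scale: assumes "f \<in> l2Z" shows "(\<lambda>n. c * f n) \<in> l2Z"
  by (rule l2Z_cmp[OF assms, of _ "(cmod c)^2"]) (simp add: norm_mult power_mult_distrib)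

lemma l2Z_uminus: assumes "f \<in> l2Z" shows "(\<lambda>n. - f n) \<in> l2Z"
  by (rule l2Z_cmp[OF assms, of _ 1]) simp

lemma l2Z_diff: assumes "f \<in> l2Z" "g \<in> l2Z" shows "(\<lambda>n. f n - g n) \<in> l2Z"
  using l2Z_add[OF assms(1) l2Z_uminus[OF assms(2)]] by simp

lemma bij_plus_int: "bij_betw (\<lambda>n::int. n + c) UNIV UNIV"
  by (rule bij_betwI[where g="\<lambda>n. n - c"]) auto

lemma l2Z_shift: assumes "f \<in> l2Z" shows "(\<lambda>n. f (n + c)) \<in> l2Z"
  using assms unfolding l2Z_iff
  using summable_on_reindex_bij_betw[OF bij_plus_int[of c], of "\<lambda>n. (cmod (f n))\<^sup>2"] by simp

lemma ns_shift: "ns (\<lambda>n. f (n + c)) = ns f"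
  unfolding ns_def using infsum_reindex_bij_betw[OF bij_plus_int[of c], of "\<lambda>n. (cmod (f n))\<^sup>2"] by simp

lemma l2Z_mult: assumes "f \<in> l2Z" "\<And>n. \<bar>w n\<bar> \<le> B" shows "(\<lambda>n. complex_of_real (w n) * f n) \<in> l2Z"
proof (rule l2Z_cmp[OF assms(1), of _ "B^2"])
  fix n
  have "\<bar>w n\<bar>^2 \<le> B^2" using power_mono[OF assms(2)[of n] abs_ge_zero, of 2] by simp
  then show "(cmod (complex_of_real (w n) * f n))\<^sup>2 \<le> B\<^sup>2 * (cmod (f n))\<^sup>2"
    by (simp add: norm_mult power_mult_distrib mult_right_mono)
qed

lemma ns_nonneg: "0 \<le> ns f"
  unfolding ns_def by (rule infsum_nonneg) simp

lemma point_le_ns: assumes "f \<in> l2Z" shows "(cmod (f i))\<^sup>2 \<le> ns f"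
  using finite_sum_le_infsum[of "\<lambda>n. (cmod (f n))\<^sup>2" UNIV "{i}"] assms
  by (simp add: ns_def l2Z_iff)

lemma ns_zero: assumes "f \<in> l2Z" "ns f = 0" shows "f = (\<lambda>_. 0)"
proof
  fix i have "(cmod (f i))\<^sup>2 \<le> 0" using point_le_ns[OF assms(1), of i] assms(2) by simp
  then show "f i = 0" by simp
qed

lemma prod_summable: assumes "f \<in> l2Z" "g \<in> l2Z" shows "(\<lambda>n. f n * cnj (g n)) summable_on UNIV"
proof -
  have "(\<lambda>n. ((cmod (f n))\<^sup>2 + (cmod (g n))\<^sup>2)) summable_on UNIV"
    using assms by (intro summable_on_add) (auto simp: l2Z_iff)
  then have "(\<lambda>n. norm (f n * cnj (g n))) summable_on UNIV"
  proof (rule summable_on_comparison_test)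
    fix n
    show "norm (f n * cnj (g n)) \<le> (cmod (f n))\<^sup>2 + (cmod (g n))\<^sup>2"
    proof -
      have "0 \<le> cmod (f n) * cmod (g n)" by simp
      moreover have "2 * (cmod (f n) * cmod (g n)) \<le> (cmod (f n))\<^sup>2 + (cmod (g n))\<^sup>2"
        using zero_le_power2[of "cmod (f n) - cmod (g n)"] by (simp add: power2_diff)
      moreover have "norm (f n * cnj (g n)) = cmod (f n) * cmod (g n)" by (simp add: norm_mult)
      ultimately show ?thesis by linarith
    qed
  qed simp
  then show ?thesis by (rule abs_summable_summable)
qed



definition ip :: "(int \<Rightarrow> complex) \<Rightarrow> (int \<Rightarrow> complex) \<Rightarrow> complex" where
  "ip f g = infsum (\<lambda>n. f n * cnj (g n)) UNIV"

lemma ip_self: assumes "f \<in> l2Z" shows "Re (ip f f) = ns f"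
proof -
  have "Re (ip f f) = infsum (\<lambda>n. Re (f n * cnj (f n))) UNIV"
    unfolding ip_def by (rule infsum_Re[symmetric]) (rule prod_summable[OF assms assms])
  also have "\<dots> = ns f" unfolding ns_def
    by (rule infsum_cong) (simp add: complex_mult_cnj cmod_power2)
  finally show ?thesis .
qed

lemma ip_commute: "ip g f = cnj (ip f g)"
  unfolding ip_def infsum_cnj[symmetric] by (simp add: mult.commute)

lemma ip_add_left: assumes "f \<in> l2Z" "g \<in> l2Z" "h \<in> l2Z"
  shows "ip (\<lambda>n. f n + g n) h = ip f h + ip g h"
  unfolding ip_def
  using infsum_add[OF prod_summable[OF assms(1,3)] prod_summable[OF assms(2,3)]]
  by (simp add: distrib_right)

lemma ip_scale_left: "ip (\<lambda>n. c * f n) h = c * ip f h"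
  unfolding ip_def
  using infsum_cmult_right'[of c "\<lambda>n. f n * cnj (h n)" UNIV]
  by (simp add: mult.assoc)

typedef l2 = l2Z morphisms vec Abs_l2
  by (rule exI[of _ "\<lambda>_. 0"]) simp

setup_lifting type_definition_l2

instantiation l2 :: real_vector
begin
lift_definition zero_l2 :: l2 is "\<lambda>_. 0" by simp
lift_definition plus_l2 :: "l2 \<Rightarrow> l2 \<Rightarrow> l2" is "\<lambda>f g n. f n + g n" by (rule l2Z_add)
lift_definition minus_l2 :: "l2 \<Rightarrow> l2 \<Rightarrow> l2" is "\<lambda>f g n. f n - g n" by (rule l2Z_diff)
lift_definition uminus_l2 :: "l2 \<Rightarrow> l2" is "\<lambda>f n. - f n" by (rule l2Z_uminus)
lift_definition scaleR_l2 :: "real \<Rightarrow> l2 \<Rightarrow> l2" is "\<lambda>r f n. complex_of_real r * f n" by (rule l2Z_scale)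
instance
proof
  fix x y z :: l2 and a b :: real
  show "x + y + z = x + (y + z)" by transfer (simp add: add.assoc)
  show "x + y = y + x" by transfer (simp add: add.commute)
  show "0 + x = x" by transfer simp
  show "- x + x = 0" by transfer simp
  show "x - y = x + - y" by transfer simp
  show "a *\<^sub>R (x + y) = a *\<^sub>R x + a *\<^sub>R y" by transfer (simp add: distrib_left)
  show "(a + b) *\<^sub>R x = a *\<^sub>R x + b *\<^sub>R x" by transfer (simp add: distrib_right)
  show "a *\<^sub>R b *\<^sub>R x = (a * b) *\<^sub>R x" by transfer (simp add: mult.assoc)
  show "1 *\<^sub>R x = x" by transfer simp
qed
end

instantiation l2 :: real_inner
begin
lift_definition norm_l2 :: "l2 \<Rightarrow> real" is "\<lambda>f. sqrt (ns f)" .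
lift_definition inner_l2 :: "l2 \<Rightarrow> l2 \<Rightarrow> real" is "\<lambda>f g. Re (ip f g)" .
definition sgn_l2 :: "l2 \<Rightarrow> l2" where "sgn_l2 x = x /\<^sub>R norm x"
definition dist_l2 :: "l2 \<Rightarrow> l2 \<Rightarrow> real" where "dist_l2 x y = norm (x - y)"
definition uniformity_l2 :: "(l2 \<times> l2) filter" where
  "uniformity_l2 = (INF e\<in>{0<..}. principal {(x, y). dist x y < e})"
definition open_l2 :: "l2 set \<Rightarrow> bool" where
  "open_l2 U = (\<forall>x\<in>U. \<forall>\<^sub>F (x', y) in uniformity. x' = x \<longrightarrow> y \<in> U)"

instance
proof
  fix x y z :: l2 and a b :: real
  show "sgn x = x /\<^sub>R norm x" by (simp add: sgn_l2_def)
  show "dist x y = norm (x - y)" by (simp add: dist_l2_def)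
  show "uniformity = (INF e\<in>{0<..}. principal {(x::l2, y). dist x y < e})" by (simp add: uniformity_l2_def)
  show "inner x y = inner y x" by transfer (subst ip_commute, simp)
  show "inner (x + y) z = inner x z + inner y z" by transfer (simp add: ip_add_left)
  show "inner (a *\<^sub>R x) y = a * inner x y" by transfer (simp add: ip_scale_left)
  show "0 \<le> inner x x" by transfer (simp add: ip_self ns_nonneg)
  show "inner x x = 0 \<longleftrightarrow> x = 0" by transfer (auto simp: ip_self ns_zero ns_def)
  show "norm x = sqrt (inner x x)" by transfer (simp add: ip_self)
next
  fix U :: "l2 set"
  show "open U = (\<forall>x\<in>U. \<forall>\<^sub>F (x', y) in uniformity. x' = x \<longrightarrow> y \<in> U)" by (simp add: open_l2_def)
qed
end



lemma vec_add: "vec (x + y) = (\<lambda>n. vec x n + vec y n)" by transfer simp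
lemma vec_diff: "vec (x - y) = (\<lambda>n. vec x n - vec y n)" by transfer simp
lemma vec_scaleR: "vec (r *\<^sub>R x) = (\<lambda>n. complex_of_real r * vec x n)" by transfer simp
lemma vec_zero: "vec 0 = (\<lambda>_. 0)" by transfer simp
lemma norm_vec: "norm x = sqrt (ns (vec x))" by transfer simp
lemma inner_vec: "inner x y = Re (ip (vec x) (vec y))" by transfer simp
lemma vec_l2Z: "vec x \<in> l2Z" using vec by blast
lemma norm_sq_vec: "(norm x)\<^sup>2 = ns (vec x)" by (simp add: norm_vec ns_nonneg)

lemma point_le_norm: "cmod (vec x i) \<le> norm x"
proof -
  have "(cmod (vec x i))\<^sup>2 \<le> (norm x)\<^sup>2" using point_le_ns[OF vec_l2Z] by (simp add: norm_sq_vec)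
  then show ?thesis by (simp add: power2_le_iff_abs_le)
qed

lemma finsum_le_ns: assumes "f \<in> l2Z" "finite F"
  shows "(\<Sum>i\<in>F. (cmod (f i))\<^sup>2) \<le> ns f"
  unfolding ns_def by (rule finite_sum_le_infsum) (use assms in \<open>auto simp: l2Z_iff\<close>)

instance l2 :: banach
proof
  fix X :: "nat \<Rightarrow> l2" assume C: "Cauchy X"
  have pc: "convergent (\<lambda>m. vec (X m) i)" for i
  proof -
    have "Cauchy (\<lambda>m. vec (X m) i)"
    proof (rule metric_CauchyI)
      fix e :: real assume "0 < e"
      then obtain M where M: "\<forall>m\<ge>M. \<forall>n\<ge>M. dist (X m) (X n) < e" using C metric_CauchyD by blast
      show "\<exists>M. \<forall>m\<ge>M. \<forall>n\<ge>M. dist (vec (X m) i) (vec (X n) i) < e"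
      proof (intro exI allI impI)
        fix m n assume "M \<le> m" "M \<le> n"
        have "cmod (vec (X m - X n) i) \<le> norm (X m - X n)" by (rule point_le_norm)
        then show "dist (vec (X m) i) (vec (X n) i) < e"
          using M \<open>M \<le> m\<close> \<open>M \<le> n\<close> by (simp add: vec_diff dist_norm dist_complex_def) (smt (verit) dist_norm)
      qed
    qed
    then show ?thesis by (simp add: Cauchy_convergent_iff)
  qed
  define g where "g i = lim (\<lambda>m. vec (X m) i)" for i
  have gl: "(\<lambda>m. vec (X m) i) \<longlonglongrightarrow> g i" for i
    using pc[of i] by (simp add: g_def convergent_LIMSEQ_iff)
  have key: "\<exists>N. \<forall>m\<ge>N. (\<lambda>i. vec (X m) i - g i) \<in> l2Z \<and> ns (\<lambda>i. vec (X m) i - g i) \<le> e\<^sup>2"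
    if "e > 0" for e
  proof -
    obtain N where N: "\<forall>m\<ge>N. \<forall>n\<ge>N. dist (X m) (X n) < e" using C metric_CauchyD \<open>e>0\<close> by blast
    have fin: "(\<Sum>i\<in>F. (cmod (vec (X m) i - g i))\<^sup>2) \<le> e\<^sup>2" if "m \<ge> N" "finite F" for m F
    proof (rule LIMSEQ_le_const2)
      show "(\<lambda>n. \<Sum>i\<in>F. (cmod (vec (X m) i - vec (X n) i))\<^sup>2) \<longlonglongrightarrow> (\<Sum>i\<in>F. (cmod (vec (X m) i - g i))\<^sup>2)"
        by (intro tendsto_intros gl)
      show "\<exists>N'. \<forall>n\<ge>N'. (\<Sum>i\<in>F. (cmod (vec (X m) i - vec (X n) i))\<^sup>2) \<le> e\<^sup>2"
      proof (intro exI allI impI)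
        fix n assume "N \<le> n"
        have "(\<Sum>i\<in>F. (cmod (vec (X m) i - vec (X n) i))\<^sup>2) \<le> ns (vec (X m - X n))"
          using finsum_le_ns[OF vec_l2Z \<open>finite F\<close>, of "X m - X n"] by (simp add: vec_diff)
        also have "\<dots> = (norm (X m - X n))\<^sup>2" by (simp add: norm_sq_vec)
        also have "\<dots> \<le> e\<^sup>2" using N \<open>N \<le> n\<close> \<open>m \<ge> N\<close>
          by (intro power_mono) (auto simp: dist_norm less_imp_le)
        finally show "(\<Sum>i\<in>F. (cmod (vec (X m) i - vec (X n) i))\<^sup>2) \<le> e\<^sup>2" .
      qed
    qed
    show ?thesis
    proof (intro exI allI impI conjI)
      fix m assume "N \<le> m"
      have bdd: "bdd_above (sum (\<lambda>i. (cmod (vec (X m) i - g i))\<^sup>2) ` {F. F \<subseteq> UNIV \<and> finite F})"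
        using fin[OF \<open>N \<le> m\<close>] by (auto intro!: bdd_aboveI)
      have s: "(\<lambda>i. (cmod (vec (X m) i - g i))\<^sup>2) summable_on UNIV"
        by (rule nonneg_bdd_above_summable_on[OF _ bdd]) simp
      then show "(\<lambda>i. vec (X m) i - g i) \<in> l2Z" by (simp add: l2Z_iff)
      show "ns (\<lambda>i. vec (X m) i - g i) \<le> e\<^sup>2" unfolding ns_def
        by (rule infsum_le_finite_sums[OF s]) (use fin[OF \<open>N \<le> m\<close>] in auto)
    qed
  qed
  obtain N1 where N1: "\<forall>m\<ge>N1. (\<lambda>i. vec (X m) i - g i) \<in> l2Z" using key[of 1] by auto
  have gin: "g \<in> l2Z"
    using l2Z_diff[OF vec_l2Z[of "X N1"] N1[rule_format, OF order_refl]] by simp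
  define G where "G = Abs_l2 g"
  have vG: "vec G = g" using gin by (simp add: G_def Abs_l2_inverse)
  have "X \<longlonglongrightarrow> G"
  proof (rule metric_LIMSEQ_I)
    fix r :: real assume "r > 0"
    then obtain N where N: "\<forall>m\<ge>N. (\<lambda>i. vec (X m) i - g i) \<in> l2Z \<and> ns (\<lambda>i. vec (X m) i - g i) \<le> (r/2)\<^sup>2"
      using key[of "r/2"] by auto
    show "\<exists>N. \<forall>m\<ge>N. dist (X m) G < r"
    proof (intro exI allI impI)
      fix m assume "N \<le> m"
      have "(dist (X m) G)\<^sup>2 = ns (\<lambda>i. vec (X m) i - g i)"
        by (simp add: dist_norm norm_sq_vec vec_diff vG)
      also have "\<dots> \<le> (r/2)\<^sup>2" using N \<open>N \<le> m\<close> by auto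
      finally have "dist (X m) G \<le> r/2" using \<open>r>0\<close> by (simp add: power2_le_iff_abs_le)
      then show "dist (X m) G < r" using \<open>r > 0\<close> by simp
    qed
  qed
  then show "convergent X" by (auto simp: convergent_def)
qed



lemma inv_sym_linear:
  fixes T :: "'a::real_inner \<Rightarrow> 'a"
  assumes lin: "linear T" and sym: "\<And>x y. inner (T x) y = inner x (T y)"
    and TS: "\<And>y. T (S y) = y" and ST: "\<And>x. S (T x) = x"
  shows "linear S" "\<And>x y. inner (S x) y = inner x (S y)"
proof -
  have inj: "a = b" if "T a = T b" for a b using ST that by metis
  show "linear S"
  proof (rule linearI)
    fix a b :: 'a and r :: real
    show "S (a + b) = S a + S b" by (rule inj) (simp add: TS linear_add[OF lin])
    show "S (r *\<^sub>R a) = r *\<^sub>R S a" by (rule inj) (simp add: TS linear_scale[OF lin])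
  qed
  fix x y
  have "inner (S x) y = inner (S x) (T (S y))" by (simp add: TS)
  also have "\<dots> = inner (T (S x)) (S y)" by (simp add: sym)
  finally show "inner (S x) y = inner x (S y)" by (simp add: TS)
qed

lemma HT_bounded_below:
  fixes T :: "'a::{real_inner,banach} \<Rightarrow> 'a"
  assumes lin: "linear T" and sym: "\<And>x y. inner (T x) y = inner x (T y)" and bij: "bij T"
  shows "\<exists>C>0. \<forall>u. norm u \<le> C * norm (T u)"
proof -
  define S where "S = inv T"
  have TS: "T (S y) = y" for y using bij by (simp add: S_def bij_is_surj surj_f_inv_f)
  have ST: "S (T x) = x" for x using bij by (simp add: S_def bij_is_inj)
  note SL = inv_sym_linear[OF lin sym TS ST]
  define F where "F n = {x. norm (S x) \<le> real n}" for n :: nat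
  have Feq: "F n = (\<Inter>h. {x. inner (S h) x \<le> real n * norm h})" for n
  proof (intro equalityI subsetI)
    fix x assume "x \<in> F n"
    then have "norm (S x) \<le> real n" by (simp add: F_def)
    have "inner (S h) x \<le> real n * norm h" for h
    proof -
      have "inner (S h) x = inner h (S x)" by (simp add: SL(2))
      also have "\<dots> \<le> norm h * norm (S x)" by (rule norm_cauchy_schwarz)
      also have "\<dots> \<le> norm h * real n" by (rule mult_left_mono) (use \<open>norm (S x) \<le> real n\<close> in auto)
      finally show ?thesis by (simp add: mult.commute)
    qed
    then show "x \<in> (\<Inter>h. {x. inner (S h) x \<le> real n * norm h})" by auto
  next
    fix x assume "x \<in> (\<Inter>h. {x. inner (S h) x \<le> real n * norm h})"
    then have "inner (S (S x)) x \<le> real n * norm (S x)" by auto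
    then have "(norm (S x))\<^sup>2 \<le> real n * norm (S x)"
      by (simp add: SL(2) power2_norm_eq_inner inner_commute)
    then have "norm (S x) \<le> real n"
      by (cases "norm (S x) = 0") (auto simp: power2_eq_square)
    then show "x \<in> F n" by (simp add: F_def)
  qed
  have clo: "closed (F n)" for n
    unfolding Feq by (intro closed_INT) (simp add: closed_halfspace_le)
  have un: "\<Union> (range F) = UNIV"
  proof -
    have "\<exists>n. x \<in> F n" for x using real_arch_simple[of "norm (S x)"] by (auto simp: F_def)
    then show ?thesis by auto
  qed
  have "\<exists>n. interior (F n) \<noteq> {}"
  proof (rule ccontr)
    assume "\<not> ?thesis"
    then have "euclidean interior_of \<Union> (range F) = {}"
      by (intro Baire_category_alt)
        (auto simp: completely_metrizable_space_euclidean closed_closedin[symmetric] clo euclidean_interior_of)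
    then show False using un by (simp add: euclidean_interior_of)
  qed
  then obtain n x0 where "x0 \<in> interior (F n)" by auto
  then obtain r where r: "r > 0" "ball x0 r \<subseteq> F n"
    by (meson open_contains_ball_eq open_interior interior_subset subset_trans)
  have small: "norm (S y) \<le> 2 * real n" if "norm y < r" for y
  proof -
    have "x0 + y \<in> F n" "x0 \<in> F n" using r that by (auto simp: dist_norm)
    then have "norm (S (x0 + y)) \<le> real n" "norm (S x0) \<le> real n" by (auto simp: F_def)
    moreover have "S y = S (x0 + y) - S x0" by (simp add: linear_add[OF SL(1)])
    ultimately show ?thesis by (metis norm_triangle_ineq4 order_trans add_mono mult_2)
  qed
  have bound: "norm (S u) \<le> (4 * real n / r) * norm u" for u
  proof (cases "u = 0")
    case True then show ?thesis using linear_0[OF SL(1)] by simp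
  next
    case False
    define c where "c = r / (2 * norm u)"
    have c: "c > 0" using False r by (simp add: c_def)
    have "norm (c *\<^sub>R u) = r/2" using False r by (simp add: c_def)
    then have "norm (S (c *\<^sub>R u)) \<le> 2 * real n" using r by (intro small) simp
    then have "c * norm (S u) \<le> 2 * real n" using c by (simp add: linear_scale[OF SL(1)])
    then have "norm (S u) \<le> 2 * real n / c" using c by (simp add: field_simps)
    also have "\<dots> = (4 * real n / r) * norm u" using False r by (simp add: c_def field_simps)
    finally show ?thesis .
  qed
  show ?thesis
  proof (intro exI conjI allI)
    have "0 \<le> 4 * real n / r" using r by simp
    then show "0 < 4 * real n / r + 1" by linarith
    fix u
    have "norm u = norm (S (T u))" by (simp add: ST)
    also have "\<dots> \<le> (4 * real n / r) * norm (T u)" by (rule bound)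
    also have "\<dots> \<le> (4 * real n / r + 1) * norm (T u)" by (rule mult_right_mono) simp_all
    finally show "norm u \<le> (4 * real n / r + 1) * norm (T u)" .
  qed
qed



lemma inner_expand: "inner (y - c *\<^sub>R u) (y - c *\<^sub>R u) = inner y y - 2 * c * inner u (y::'a::real_inner) + c^2 * inner u u"
  by (simp add: inner_diff_left inner_diff_right inner_commute[of y u] power2_eq_square right_diff_distrib)

lemma approx_spec:
  fixes T :: "'a::{real_inner,banach} \<Rightarrow> 'a"
  assumes lin: "linear T" and sym: "\<And>x y. inner (T x) y = inner x (T y)"
    and phi: "norm \<phi> = 1" "norm (T \<phi>) \<le> d"
  shows "\<exists>s. \<bar>s\<bar> \<le> d \<and> \<not> bij (\<lambda>x. T x - s *\<^sub>R x)"
proof (rule ccontr)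
  assume "\<not> ?thesis"
  then have H: "\<And>s. \<bar>s\<bar> \<le> d \<Longrightarrow> bij (\<lambda>x. T x - s *\<^sub>R x)" by blast
  have linS: "linear (\<lambda>x. T x - s *\<^sub>R x)" for s
    by (intro linear_compose_sub lin linear_scaleR)
  have symS: "inner (T x - s *\<^sub>R x) y = inner x (T y - s *\<^sub>R y)" for s x y
    by (simp add: inner_diff_left inner_diff_right sym)
  have hb: "\<exists>C>0. \<forall>u. norm u \<le> C * norm (T u - s *\<^sub>R u)" if "\<bar>s\<bar> \<le> d" for s
    by (rule HT_bounded_below[OF linS symS H[OF that]])
  have d0: "0 \<le> d" using phi(2) norm_ge_zero order_trans by blast
  have "bij T" using H[of 0] d0 by simp
  define R where "R = inv T"
  have TR: "T (R y) = y" for y using \<open>bij T\<close> by (simp add: R_def bij_is_surj surj_f_inv_f)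
  have RT: "R (T x) = x" for x using \<open>bij T\<close> by (simp add: R_def bij_is_inj)
  note RL = inv_sym_linear[OF lin sym TR RT]
  obtain C0 where C0: "C0 > 0" "\<And>u. norm u \<le> C0 * norm (T u - 0 *\<^sub>R u)" using hb[of 0] d0 by auto
  have Rb: "norm (R y) \<le> C0 * norm y" for y using C0(2)[of "R y"] by (simp add: TR)
  define M where "M = (SUP x. norm (R x) / norm x)"
  have bdd: "bdd_above (range (\<lambda>x. norm (R x) / norm x))"
  proof (rule bdd_aboveI2)
    fix x show "norm (R x) / norm x \<le> C0"
      using Rb[of x] C0(1) by (cases "x = 0") (auto simp: divide_le_eq mult.commute)
  qed
  have Mb: "norm (R x) \<le> M * norm x" for x
  proof (cases "x = 0")
    case True then show ?thesis using linear_0[OF RL(1)] by simp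
  next
    case False
    have "norm (R x) / norm x \<le> M" unfolding M_def by (rule cSUP_upper[OF _ bdd]) simp
    then show ?thesis using False by (simp add: divide_le_eq)
  qed
  have M0: "0 \<le> M"
  proof -
    have "norm (R \<phi>) / norm \<phi> \<le> M" unfolding M_def by (rule cSUP_upper[OF _ bdd]) simp
    then show "0 \<le> M" using phi(1) by (smt (verit) divide_nonneg_nonneg norm_ge_zero)
  qed
  have Md: "1 \<le> M * d"
  proof -
    have "1 = norm (R (T \<phi>))" using phi(1) by (simp add: RT)
    also have "\<dots> \<le> M * norm (T \<phi>)" by (rule Mb)
    also have "\<dots> \<le> M * d" by (rule mult_left_mono[OF phi(2) M0])
    finally show ?thesis .
  qed
  have Mpos: "M > 0" using Md M0 by (cases "M = 0") auto
  have dM: "1 / M \<le> d" using Md Mpos by (simp add: divide_le_eq mult.commute)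
  define s0 where "s0 = 1 / M"
  obtain C1 where C1: "C1 > 0" "\<And>u. norm u \<le> C1 * norm (T u - s0 *\<^sub>R u)"
    using hb[of s0] dM Mpos by (auto simp: s0_def)
  obtain C2 where C2: "C2 > 0" "\<And>u. norm u \<le> C2 * norm (T u - (- s0) *\<^sub>R u)"
    using hb[of "- s0"] dM Mpos by (auto simp: s0_def)
  define D where "D = C1 * C2"
  have Dpos: "D > 0" using C1 C2 by (simp add: D_def)
  define e where "e = min (M/2) (M^5 / (128 * D^2))"
  have e: "e > 0" "e \<le> M/2" "e \<le> M^5 / (128 * D^2)" using Mpos Dpos by (auto simp: e_def)
  have "M - e < M" using e by simp
  then obtain x where x: "M - e < norm (R x) / norm x"
    unfolding M_def using less_cSUP_iff[OF _ bdd] by (metis M_def UNIV_not_empty)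
  have "x \<noteq> 0" using x e by auto
  define y where "y = x /\<^sub>R norm x"
  have ny: "norm y = 1" using \<open>x \<noteq> 0\<close> by (simp add: y_def)
  have Ry: "norm (R y) = norm (R x) / norm x" using \<open>x \<noteq> 0\<close>
    by (simp add: y_def linear_scale[OF RL(1)] divide_inverse mult.commute)
  have Ry1: "M - e < norm (R y)" using x Ry by simp
  have Ry2: "norm (R y) \<le> M" using Mb[of y] ny by simp
  define u where "u = R (R y)"
  have iu: "inner u y = (norm (R y))\<^sup>2"
    by (simp add: u_def RL(2) power2_norm_eq_inner)
  have Me: "M/2 \<le> M - e" using e by simp
  have lo: "(M - e)^2 \<le> norm u"
  proof -
    have "(M - e)^2 \<le> (norm (R y))\<^sup>2" using Ry1 Me Mpos by (intro power_mono) auto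
    also have "\<dots> = inner u y" by (simp add: iu)
    also have "\<dots> \<le> norm u * norm y" by (rule norm_cauchy_schwarz)
    finally show ?thesis using ny by simp
  qed
  have nu: "norm u \<le> M * M" using Mb[of "R y"] Ry2 Mpos
    by (simp add: u_def) (meson mult_left_mono less_imp_le order_trans)
  have TTu: "T (T u) = y" by (simp add: u_def TR)
  define w where "w = y - (s0 * s0) *\<^sub>R u"
  have Tv: "T (T u - (- s0) *\<^sub>R u) - s0 *\<^sub>R (T u - (- s0) *\<^sub>R u) = w"
    by (simp add: w_def linear_diff[OF lin] linear_add[OF lin] linear_scale[OF lin] TTu algebra_simps)
  have up: "norm u \<le> D * norm w"
  proof -
    have "norm u \<le> C2 * norm (T u - (- s0) *\<^sub>R u)" by (rule C2(2))
    also have "\<dots> \<le> C2 * (C1 * norm w)"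
    proof (rule mult_left_mono)
      show "norm (T u - (- s0) *\<^sub>R u) \<le> C1 * norm w"
        using C1(2)[of "T u - (- s0) *\<^sub>R u"] unfolding Tv .
    qed (use C2(1) in simp)
    finally show ?thesis by (simp add: D_def mult_ac)
  qed
  have wsq: "(norm w)\<^sup>2 = 1 - 2 * (s0 * s0) * (norm (R y))\<^sup>2 + (s0 * s0)^2 * (norm u)\<^sup>2"
  proof -
    have yy: "inner y y = 1" using ny by (simp add: power2_norm_eq_inner[symmetric])
    have uu: "inner u u = (norm u)\<^sup>2" by (simp add: power2_norm_eq_inner)
    have "(norm w)\<^sup>2 = inner w w" by (simp add: power2_norm_eq_inner)
    also have "\<dots> = inner y y - 2 * (s0 * s0) * inner u y + (s0 * s0)^2 * inner u u"
      unfolding w_def by (rule inner_expand)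
    finally show ?thesis by (simp add: yy uu iu)
  qed
  have wb: "(norm w)\<^sup>2 \<le> 4 * e / M"
  proof -
    have s0M: "s0 * M = 1" using Mpos by (simp add: s0_def)
    have a: "(s0 * s0)^2 * (norm u)\<^sup>2 \<le> 1"
    proof -
      have "(norm u)\<^sup>2 \<le> (M*M)^2" using nu by (intro power_mono) auto
      then have "(s0 * s0)^2 * (norm u)\<^sup>2 \<le> (s0 * s0)^2 * (M*M)^2" by (simp add: mult_left_mono)
      also have "\<dots> = 1" using Mpos by (simp add: s0_def power_mult_distrib power_divide)
      finally show ?thesis .
    qed
    have b: "(M - e)^2 \<le> (norm (R y))\<^sup>2" using Ry1 Me Mpos by (intro power_mono) auto
    have "2 * (s0 * s0) * (M - e)^2 \<le> 2 * (s0 * s0) * (norm (R y))\<^sup>2" using b by (intro mult_left_mono) auto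
    moreover have "2 * (s0 * s0) * (M - e)^2 = 2 - 4 * e / M + 2 * e^2/M^2" using Mpos
      unfolding s0_def by (simp add: field_simps power2_eq_square)
    ultimately have "(norm w)\<^sup>2 \<le> 1 - (2 - 4 * e / M + 2 * e^2/M^2) + 1" using wsq a by linarith
    moreover have "0 \<le> 2 * e^2/M^2" by simp
    ultimately show ?thesis by linarith
  qed
  have "(M/2)^4 \<le> (M - e)^4" using Me Mpos by (intro power_mono) auto
  also have "(M - e)^4 = ((M - e)^2)^2" by simp
  also have "\<dots> \<le> (norm u)^2" using lo by (intro power_mono) (auto)
  also have "\<dots> \<le> (D * norm w)^2" using up by (intro power_mono) auto
  also have "\<dots> = D^2 * (norm w)^2" by (simp add: power_mult_distrib)
  also have "\<dots> \<le> D^2 * (4 * e / M)" using wb by (intro mult_left_mono) auto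
  also have "\<dots> \<le> D^2 * (4 * (M^5 / (128 * D^2)) / M)" using e Mpos
    by (intro mult_left_mono divide_right_mono) auto
  also have "\<dots> = M^4 / 32" using Dpos Mpos by (simp add: field_simps power2_eq_square power_numeral_reduce)
  finally have "(M/2)^4 \<le> M^4/32" .
  then show False using Mpos by (simp add: power_divide)
qed



definition jac :: "(int \<Rightarrow> real) \<Rightarrow> (int \<Rightarrow> complex) \<Rightarrow> (int \<Rightarrow> complex)" where
  "jac w f = (\<lambda>n. f (n + 1) + f (n - 1) + complex_of_real (w n) * f n)"

definition bnd :: "(int \<Rightarrow> real) \<Rightarrow> bool" where
  "bnd w \<longleftrightarrow> (\<exists>B. \<forall>n. \<bar>w n\<bar> \<le> B)"

lemma l2Z_shift': "f \<in> l2Z \<Longrightarrow> (\<lambda>n. f (n - c)) \<in> l2Z"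
  using l2Z_shift[of f "- c"] by simp

lemma l2Z_mult': assumes "f \<in> l2Z" "bnd w" shows "(\<lambda>n. complex_of_real (w n) * f n) \<in> l2Z"
  using assms l2Z_mult unfolding bnd_def by blast

lemma l2Z_jac: assumes "f \<in> l2Z" "bnd w" shows "jac w f \<in> l2Z"
  unfolding jac_def
  by (intro l2Z_add l2Z_shift l2Z_shift' l2Z_mult' assms)

lemma ip_add_right: assumes "f \<in> l2Z" "g \<in> l2Z" "h \<in> l2Z"
  shows "ip h (\<lambda>n. f n + g n) = ip h f + ip h g"
  using ip_add_left[OF assms] ip_commute by (metis complex_cnj_add)

lemma ip_shift: "ip (\<lambda>n. f (n + c)) g = ip f (\<lambda>n. g (n - c))"
  unfolding ip_def
  using infsum_reindex_bij_betw[OF bij_plus_int[of c], of "\<lambda>m. f m * cnj (g (m - c))"] by simp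

lemma ip_shift': "ip (\<lambda>n. f (n - c)) g = ip f (\<lambda>n. g (n + c))"
  using ip_shift[of f "- c" g] by simp

lemma ip_mult: "ip (\<lambda>n. complex_of_real (w n) * f n) g = ip f (\<lambda>n. complex_of_real (w n) * g n)"
  unfolding ip_def by (simp add: mult_ac)

lemma ip_jac: assumes "f \<in> l2Z" "g \<in> l2Z" "bnd w"
  shows "ip (jac w f) g = ip f (jac w g)"
proof -
  have m1: "(\<lambda>n. f (n + 1)) \<in> l2Z" "(\<lambda>n. f (n - 1)) \<in> l2Z" "(\<lambda>n. complex_of_real (w n) * f n) \<in> l2Z"
    by (intro l2Z_shift l2Z_shift' l2Z_mult' assms)+
  have m2: "(\<lambda>n. g (n + 1)) \<in> l2Z" "(\<lambda>n. g (n - 1)) \<in> l2Z" "(\<lambda>n. complex_of_real (w n) * g n) \<in> l2Z"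
    by (intro l2Z_shift l2Z_shift' l2Z_mult' assms)+
  have "ip (jac w f) g = ip (\<lambda>n. f (n + 1) + f (n - 1)) g + ip (\<lambda>n. complex_of_real (w n) * f n) g"
    unfolding jac_def using ip_add_left[OF l2Z_add[OF m1(1,2)] m1(3) assms(2)] by simp
  also have "\<dots> = ip (\<lambda>n. f (n + 1)) g + ip (\<lambda>n. f (n - 1)) g + ip (\<lambda>n. complex_of_real (w n) * f n) g"
    using ip_add_left[OF m1(1,2) assms(2)] by simp
  also have "\<dots> = ip f (\<lambda>n. g (n - 1)) + ip f (\<lambda>n. g (n + 1)) + ip f (\<lambda>n. complex_of_real (w n) * g n)"
    by (simp add: ip_shift ip_shift' ip_mult)
  also have "\<dots> = ip f (\<lambda>n. g (n + 1) + g (n - 1)) + ip f (\<lambda>n. complex_of_real (w n) * g n)"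
    using ip_add_right[OF m2(1,2) assms(1)] by simp
  also have "\<dots> = ip f (jac w g)"
    unfolding jac_def using ip_add_right[OF l2Z_add[OF m2(1,2)] m2(3) assms(1)] by simp
  finally show ?thesis .
qed

definition Jop :: "(int \<Rightarrow> real) \<Rightarrow> l2 \<Rightarrow> l2" where
  "Jop w x = Abs_l2 (jac w (vec x))"

lemma vec_Jop: "bnd w \<Longrightarrow> vec (Jop w x) = jac w (vec x)"
  unfolding Jop_def by (rule Abs_l2_inverse) (intro l2Z_jac vec_l2Z)

lemma vec_eqI: "vec x = vec y \<Longrightarrow> x = y" by (simp add: vec_inject)

lemma Jop_linear: assumes "bnd w" shows "linear (Jop w)"
proof (rule linearI)
  fix a b :: l2 and r :: real
  show "Jop w (a + b) = Jop w a + Jop w b"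
    by (rule vec_eqI) (simp add: vec_Jop[OF assms] vec_add jac_def algebra_simps)
  show "Jop w (r *\<^sub>R a) = r *\<^sub>R Jop w a"
    by (rule vec_eqI) (simp add: vec_Jop[OF assms] vec_scaleR jac_def algebra_simps)
qed

lemma Jop_sym: assumes "bnd w" shows "inner (Jop w x) y = inner x (Jop w y)"
  by (simp add: inner_vec vec_Jop[OF assms] ip_jac[OF vec_l2Z vec_l2Z assms])

lemma Jop_shift: assumes "bnd w" shows "Jop w x - s *\<^sub>R x = Jop (\<lambda>n. w n - s) x"
proof -
  have "bnd (\<lambda>n. w n - s)" using assms unfolding bnd_def
    by (metis abs_triangle_ineq4 add_mono order_trans order_refl)
  then show ?thesis
    by (intro vec_eqI) (simp add: vec_Jop assms vec_diff vec_scaleR jac_def algebra_simps)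
qed

lemma bij_Jop: assumes "bnd w" "bij_betw (jac w) l2Z l2Z" shows "bij (Jop w)"
proof (rule bijI)
  show "inj (Jop w)"
  proof (rule injI)
    fix x y assume "Jop w x = Jop w y"
    then have "jac w (vec x) = jac w (vec y)" using vec_Jop[OF assms(1)] by metis
    then have "vec x = vec y" using assms(2) vec_l2Z unfolding bij_betw_def inj_on_def by blast
    then show "x = y" by (rule vec_eqI)
  qed
  show "surj (Jop w)"
    unfolding surj_def
  proof
    fix y
    obtain f where f: "f \<in> l2Z" "jac w f = vec y"
      using assms(2) vec_l2Z[of y] unfolding bij_betw_def by (metis imageE)
    have "Jop w (Abs_l2 f) = y"
      by (rule vec_eqI) (simp add: vec_Jop[OF assms(1)] Abs_l2_inverse f)
    then show "\<exists>x. y = Jop w x" by metis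
  qed
qed



lemma sin_rec: "sin ((t::real) * (x + 1)) + sin (t * (x - 1)) = 2 * cos t * sin (t * x)"
  by (simp add: distrib_left right_diff_distrib sin_add sin_diff)

lemma tele: "2 * sin t * (\<Sum>m=1..n. cos (2 * real m * t)) = sin ((2 * real n + 1) * t) - sin t"
proof (induction n)
  case 0 then show ?case by simp
next
  case (Suc n)
  have "2 * sin t * cos (2 * real (Suc n) * t) = sin ((2 * real (Suc n) + 1) * t) - sin ((2 * real n + 1) * t)"
  proof -
    have a: "(2 * real (Suc n) + 1) * t = 2 * real (Suc n) * t + t" by (simp add: algebra_simps)
    have b: "(2 * real n + 1) * t = 2 * real (Suc n) * t - t" by (simp add: algebra_simps)
    show ?thesis unfolding a b by (simp add: sin_add sin_diff)
  qed
  then show ?case using Suc by (simp add: distrib_left)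
qed

lemma sum_sin_sq:
  assumes "1 \<le> k" "k \<le> p"
  shows "(\<Sum>m=1..p. (sin (pi * real k / (real p + 1) * real m))\<^sup>2) = (real p + 1) / 2"
proof -
  define t where "t = pi * real k / (real p + 1)"
  have "pi * real k \<le> pi * real p" using assms by simp
  moreover have "pi * (real p + 1) = pi * real p + pi" by (simp add: algebra_simps)
  ultimately have h: "pi * real k < pi * (real p + 1)" using pi_gt_zero by linarith
  have t0: "0 < t" "t < pi" using assms h by (auto simp: t_def pos_divide_less_eq mult.commute)
  have st: "sin t > 0" using t0 by (rule sin_gt_zero)
  have "(2 * real p + 1) * t = 2 * pi * real k - t" using assms by (simp add: t_def field_simps)
  then have "sin ((2 * real p + 1) * t) = - sin t"
  proof -
    have c: "cos (2 * pi * real k) = 1"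
      using cos_double_sin[of "pi * real k"] by (simp add: mult.assoc)
    have s: "sin (2 * pi * real k) = 0" using sin_npi[of "2 * k"] by (simp add: mult_ac)
    assume "(2 * real p + 1) * t = 2 * pi * real k - t"
    then show ?thesis by (simp add: sin_diff c s)
  qed
  then have "2 * sin t * (\<Sum>m=1..p. cos (2 * real m * t)) = 2 * sin t * (-1)" using tele[of t p] by simp
  then have e: "sin t * (\<Sum>m=1..p. cos (2 * real m * t)) = sin t * (-1)" by simp
  have cs: "(\<Sum>m=1..p. cos (2 * real m * t)) = -1"
    using mult_left_cancel[of "sin t" "\<Sum>m=1..p. cos (2 * real m * t)" "-1"] e st by simp
  have "(\<Sum>m=1..p. (sin (t * real m))\<^sup>2) = (\<Sum>m=1..p. (1 - cos (2 * real m * t)) / 2)"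
  proof (rule sum.cong)
    fix m
    have "2 * real m * t = 2 * (t * real m)" by simp
    then have "cos (2 * real m * t) = 1 - 2 * (sin (t * real m))\<^sup>2" using cos_double_sin[of "t * real m"] by metis
    then show "(sin (t * real m))\<^sup>2 = (1 - cos (2 * real m * t)) / 2" by simp
  qed simp
  also have "\<dots> = (real p - (\<Sum>m=1..p. cos (2 * real m * t))) / 2"
    by (simp add: sum_divide_distrib[symmetric] sum_subtractf)
  also have "\<dots> = (real p + 1) / 2" using cs by simp
  finally show ?thesis by (simp add: t_def)
qed



lemma infsum_fin: fixes f :: "int \<Rightarrow> real"
  assumes "finite F" "\<And>n. n \<notin> F \<Longrightarrow> f n = 0"
  shows "infsum f UNIV = sum f F"
proof -
  have "infsum f UNIV = infsum f F"
    by (rule infsum_cong_neutral) (use assms in auto)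
  then show ?thesis using assms by simp
qed

lemma l2Z_fin: assumes "finite F" "\<And>n. n \<notin> F \<Longrightarrow> f n = 0"
  shows "f \<in> l2Z"
  unfolding l2Z_iff
  by (rule finite_nonzero_values_imp_summable_on, rule finite_subset[OF _ assms(1)]) (use assms in auto)

lemma eig_vec:
  fixes p k :: nat and a :: int and w :: "int \<Rightarrow> real"
  assumes k: "1 \<le> k" "k \<le> p"
    and hw: "\<And>n. a < n \<Longrightarrow> n \<le> a + int p \<Longrightarrow> w n = - (2 * cos t)"
    and t: "t = pi * real k / (real p + 1)"
  shows "\<exists>\<phi>0. \<phi>0 \<in> l2Z \<and> ns \<phi>0 = (real p + 1)/2 \<and> ns (jac w \<phi>0) \<le> 2 * t^2"
proof -
  define \<phi>0 where "\<phi>0 n = (if a < n \<and> n \<le> a + int p then complex_of_real (sin (t * real_of_int (n - a))) else 0)" for n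
  have tp: "t * (real p + 1) = pi * real k" using t by simp
  have ext: "\<phi>0 n = complex_of_real (sin (t * real_of_int (n - a)))" if "a \<le> n" "n \<le> a + int p + 1" for n
  proof (cases "a < n \<and> n \<le> a + int p")
    case True then show ?thesis by (simp add: \<phi>0_def)
  next
    case False
    then have "n = a \<or> n = a + int p + 1" using that by auto
    then show ?thesis
    proof
      assume "n = a" then show ?thesis by (simp add: \<phi>0_def)
    next
      assume n: "n = a + int p + 1"
      have "t * real_of_int (n - a) = pi * real k" using tp n by simp
      then show ?thesis using n by (simp add: \<phi>0_def)
    qed
  qed
  have out: "\<phi>0 n = 0" if "n < a \<or> n > a + int p" for n using that by (auto simp: \<phi>0_def)
  define r where "r n = (if n = a then complex_of_real (sin t) else if n = a + int p + 1 then complex_of_real (sin (t * real p)) else 0)" for n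
  have jr: "jac w \<phi>0 = r"
  proof
    fix n
    consider (i) "a < n \<and> n \<le> a + int p" | (ii) "n = a" | (iii) "n = a + int p + 1" | (iv) "n < a \<or> n > a + int p + 1"
      by linarith
    then show "jac w \<phi>0 n = r n"
    proof cases
      case i
      have "\<phi>0 (n + 1) = complex_of_real (sin (t * (real_of_int (n - a) + 1)))" using i by (subst ext) (auto simp: algebra_simps)
      moreover have "\<phi>0 (n - 1) = complex_of_real (sin (t * (real_of_int (n - a) - 1)))" using i by (subst ext) (auto simp: algebra_simps)
      moreover have "\<phi>0 n = complex_of_real (sin (t * real_of_int (n - a)))" using i by (subst ext) (auto simp: algebra_simps)
      moreover have "w n = - (2 * cos t)" using i hw by auto
      ultimately have "jac w \<phi>0 n = complex_of_real (sin (t * (real_of_int (n - a) + 1)) + sin (t * (real_of_int (n - a) - 1)) - 2 * cos t * sin (t * real_of_int (n - a)))"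
        by (simp add: jac_def)
      also have "\<dots> = 0" by (simp add: sin_rec)
      finally show ?thesis using i by (simp add: r_def)
    next
      case ii
      have "\<phi>0 (n + 1) = complex_of_real (sin t)" using ii k by (subst ext) auto
      moreover have "\<phi>0 (n - 1) = 0" using ii by (intro out) auto
      moreover have "\<phi>0 n = 0" using ii by (simp add: \<phi>0_def)
      ultimately show ?thesis using ii by (simp add: jac_def r_def)
    next
      case iii
      have "\<phi>0 (n - 1) = complex_of_real (sin (t * real p))" using iii k by (subst ext) auto
      moreover have "\<phi>0 (n + 1) = 0" using iii by (intro out) auto
      moreover have "\<phi>0 n = 0" using iii by (simp add: \<phi>0_def)
      ultimately show ?thesis using iii k by (simp add: jac_def r_def)
    next
      case iv
      have "\<phi>0 (n - 1) = 0" "\<phi>0 (n + 1) = 0" "\<phi>0 n = 0" using iv by (auto simp: \<phi>0_def)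
      moreover have "n \<noteq> a" "n \<noteq> a + int p + 1" using iv by auto
      ultimately show ?thesis by (simp add: jac_def r_def)
    qed
  qed
  have fin: "finite {a<..a + int p}" by simp
  have l2: "\<phi>0 \<in> l2Z" by (rule l2Z_fin[OF fin]) (auto simp: \<phi>0_def)
  have "ns \<phi>0 = (\<Sum>n\<in>{a<..a + int p}. (cmod (\<phi>0 n))\<^sup>2)"
    unfolding ns_def by (rule infsum_fin[OF fin]) (auto simp: \<phi>0_def)
  also have "{a<..a + int p} = (\<lambda>m. a + int m) ` {1..p}"
  proof (intro equalityI subsetI)
    fix n assume "n \<in> {a<..a + int p}"
    then have "n = a + int (nat (n - a))" "nat (n - a) \<in> {1..p}" by auto
    then show "n \<in> (\<lambda>m. a + int m) ` {1..p}" by blast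
  qed auto
  also have "(\<Sum>n\<in>(\<lambda>m. a + int m) ` {1..p}. (cmod (\<phi>0 n))\<^sup>2) = (\<Sum>m=1..p. (cmod (\<phi>0 (a + int m)))\<^sup>2)"
    by (rule sum.reindex[unfolded comp_def]) (auto simp: inj_on_def)
  also have "\<dots> = (\<Sum>m=1..p. (sin (pi * real k / (real p + 1) * real m))\<^sup>2)"
    by (rule sum.cong) (auto simp: \<phi>0_def t)
  also have "\<dots> = (real p + 1) / 2" by (rule sum_sin_sq[OF k])
  finally have ns1: "ns \<phi>0 = (real p + 1) / 2" .
  have "ns (jac w \<phi>0) = (\<Sum>n\<in>{a, a + int p + 1}. (cmod (r n))\<^sup>2)"
    unfolding ns_def jr by (rule infsum_fin) (auto simp: r_def)
  also have "\<dots> = (sin t)\<^sup>2 + (sin (t * real p))\<^sup>2" by (simp add: r_def)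
  also have "\<dots> \<le> t^2 + t^2"
  proof (rule add_mono)
    show "(sin t)\<^sup>2 \<le> t^2" using abs_sin_x_le_abs_x[of t] by (simp add: abs_le_square_iff)
    have "t * real p = pi * real k - t" using tp by (simp add: algebra_simps)
    then have "sin (t * real p) = - cos (pi * real k) * sin t" by (simp add: sin_diff)
    then have "\<bar>sin (t * real p)\<bar> \<le> \<bar>sin t\<bar>" by (simp add: abs_mult mult_left_le_one_le)
    then show "(sin (t * real p))\<^sup>2 \<le> t^2" using abs_sin_x_le_abs_x[of t] by (simp add: abs_le_square_iff)
  qed
  finally show ?thesis using l2 ns1 by auto
qed



lemma bnd_shift: "bnd w \<Longrightarrow> bnd (\<lambda>n. w n - s)"
  unfolding bnd_def by (metis abs_triangle_ineq4 add_mono order_trans order_refl)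

lemma spec_near:
  assumes bw: "bnd w" and l2: "\<phi>0 \<in> l2Z" and pos: "ns \<phi>0 > 0"
    and r: "ns (jac w \<phi>0) \<le> d^2 * ns \<phi>0" and d: "0 \<le> d"
  shows "\<exists>s. \<bar>s\<bar> \<le> d \<and> \<not> bij_betw (jac (\<lambda>n. w n - s)) l2Z l2Z"
proof -
  define x0 where "x0 = Abs_l2 \<phi>0"
  have vx0: "vec x0 = \<phi>0" using l2 by (simp add: x0_def Abs_l2_inverse)
  have nx0: "norm x0 = sqrt (ns \<phi>0)" by (simp add: norm_vec vx0)
  have nx0p: "norm x0 > 0" using pos nx0 by simp
  define \<phi> where "\<phi> = (1 / norm x0) *\<^sub>R x0"
  have nphi: "norm \<phi> = 1" using nx0p by (simp add: \<phi>_def)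
  have "norm (Jop w x0) = sqrt (ns (jac w \<phi>0))" by (simp add: norm_vec vec_Jop[OF bw] vx0)
  also have "\<dots> \<le> sqrt (d^2 * ns \<phi>0)" using r by simp
  also have "\<dots> = d * norm x0" using d by (simp add: real_sqrt_mult nx0)
  finally have "norm (Jop w x0) \<le> d * norm x0" .
  then have "norm (Jop w \<phi>) \<le> d" using nx0p
    by (simp add: \<phi>_def linear_scale[OF Jop_linear[OF bw]] divide_le_eq mult.commute)
  from approx_spec[OF Jop_linear[OF bw] Jop_sym[OF bw] nphi this]
  obtain s where s: "\<bar>s\<bar> \<le> d" "\<not> bij (\<lambda>x. Jop w x - s *\<^sub>R x)" by blast
  have "\<not> bij (Jop (\<lambda>n. w n - s))" using s(2) by (simp add: Jop_shift[OF bw])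
  then have "\<not> bij_betw (jac (\<lambda>n. w n - s)) l2Z l2Z" using bij_Jop[OF bnd_shift[OF bw]] by blast
  with s(1) show ?thesis by blast
qed

lemma V_bound: "\<bar>polymer_V p v \<omega> l n\<bar> \<le> \<bar>v\<bar>"
  by (simp add: polymer_V_def vblock_def)

lemma V_zero:
  assumes "p \<ge> 1" "\<omega> j = 1" "2 * int p * j - l - 1 < n" "n \<le> 2 * int p * j - l - 1 + int p"
  shows "polymer_V p v \<omega> l n = 0"
proof -
  define m where "m = n + l - 2 * int p * j"
  have m: "0 \<le> m" "m < int p" using assms by (auto simp: m_def)
  have nl: "n + l = m + j * (2 * int p)" by (simp add: m_def algebra_simps)
  have "(n + l) div (2 * int p) = j" unfolding nl using m assms(1) by simp
  moreover have "(n + l) mod (2 * int p) = m" unfolding nl using m assms(1) by simp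
  ultimately show ?thesis using assms(2) m by (simp add: polymer_V_def vblock_def)
qed

lemma powr_32: "(x::real) > 0 \<Longrightarrow> x powr (3/2) = x * sqrt x"
proof -
  assume "x > 0"
  have "x powr (3/2) = x powr (1 + 1/2)" by simp
  also have "\<dots> = x powr 1 * x powr (1/2)" by (rule powr_add)
  also have "\<dots> = x * sqrt x" using \<open>x > 0\<close> by (simp add: powr_half_sqrt)
  finally show ?thesis .
qed

lemma main_omega:
  fixes p k :: nat
  assumes p: "p \<ge> 1" and k: "1 \<le> k" "k \<le> p" and oj: "\<omega> j = 1"
  shows "infdist (complex_of_real (2 * cos (pi * real k / (real p + 1))))
           (spec_l2 (polymer_H p v \<omega> l)) \<le> 18 * real k / real p powr (3/2)"
proof -
  define t where "t = pi * real k / (real p + 1)"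
  define E where "E = 2 * cos t"
  define w where "w n = polymer_V p v \<omega> l n - E" for n
  define a where "a = 2 * int p * j - l - 1"
  have bw: "bnd w" unfolding bnd_def w_def
    by (rule exI[of _ "\<bar>v\<bar> + \<bar>E\<bar>"]) (metis V_bound abs_triangle_ineq4 add_mono order_trans order_refl)
  have hw: "w n = - (2 * cos t)" if "a < n" "n \<le> a + int p" for n
    using V_zero[where p=p and \<omega>=\<omega> and j=j and l=l and n=n and v=v] p oj that by (simp add: w_def E_def a_def)
  obtain \<phi>0 where \<phi>0: "\<phi>0 \<in> l2Z" "ns \<phi>0 = (real p + 1)/2" "ns (jac w \<phi>0) \<le> 2 * t^2"
    using eig_vec[where a=a and w=w and t=t and p=p and k=k, OF k hw t_def] by blast
  define d where "d = 2 * t / sqrt (real p + 1)"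
  have t0: "t \<ge> 0" by (simp add: t_def)
  have d0: "d \<ge> 0" using t0 by (simp add: d_def)
  have "d^2 * ns \<phi>0 = 2 * t^2" unfolding d_def \<phi>0(2)
    by (simp add: power_divide field_simps power2_eq_square)
  then have r: "ns (jac w \<phi>0) \<le> d^2 * ns \<phi>0" using \<phi>0(3) by simp
  obtain s where s: "\<bar>s\<bar> \<le> d" "\<not> bij_betw (jac (\<lambda>n. w n - s)) l2Z l2Z"
    using spec_near[OF bw \<phi>0(1) _ r d0] \<phi>0(2) by auto
  have "jac (\<lambda>n. w n - s) = (\<lambda>\<psi> n. polymer_H p v \<omega> l \<psi> n - complex_of_real (E + s) * \<psi> n)"
    by (intro ext) (simp add: jac_def polymer_H_def w_def algebra_simps)
  then have "complex_of_real (E + s) \<in> spec_l2 (polymer_H p v \<omega> l)"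
    using s(2) by (simp add: spec_l2_def)
  then have "infdist (complex_of_real E) (spec_l2 (polymer_H p v \<omega> l)) \<le> dist (complex_of_real E) (complex_of_real (E + s))"
    by (rule infdist_le)
  also have "\<dots> = \<bar>s\<bar>" by (simp add: dist_complex_def)
  also have "\<dots> \<le> d" by (rule s(1))
  also have "d \<le> 18 * real k / real p powr (3/2)"
  proof -
    have pp: "real p > 0" using p by simp
    have "d = (2 * pi * real k) / ((real p + 1) * sqrt (real p + 1))"
      by (simp add: d_def t_def field_simps)
    also have "\<dots> \<le> (18 * real k) / (real p * sqrt (real p))"
    proof (rule frac_le)
      show "0 \<le> 18 * real k" by simp
      show "2 * pi * real k \<le> 18 * real k" using pi_less_4 by (intro mult_right_mono) auto
      show "0 < real p * sqrt (real p)" using pp by simp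
      show "real p * sqrt (real p) \<le> (real p + 1) * sqrt (real p + 1)"
        by (intro mult_mono) auto
    qed
    also have "\<dots> = 18 * real k / real p powr (3/2)" using pp by (simp add: powr_32)
    finally show ?thesis .
  qed
  finally show ?thesis by (simp add: E_def t_def)
qed



theorem proposition4p3:
  fixes \<mu>0 :: "(int \<Rightarrow> int) measure" and p :: nat and v :: real
  assumes "prob_space \<mu>0"
    and "sets \<mu>0 = sets Omega_M" and "space \<mu>0 = space Omega_M"
    and "shift_invariant \<mu>0" and "shift_ergodic \<mu>0"
    and "p \<ge> 1" and "v > 0"
    and "measure \<mu>0 {\<omega> \<in> space \<mu>0. \<omega> 0 = -1} < 1"
  shows "AE x in (\<mu>0 \<Otimes>\<^sub>M measure_pmf (pmf_of_set {0..<2 * int p})).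
           \<forall>k \<in> {1..p}.
             infdist (complex_of_real (2 * cos (pi * real k / (real p + 1))))
                     (spec_l2 (polymer_H p v (fst x) (snd x)))
               \<le> 18 * real k / real p powr (3/2)"
proof -
  interpret P: prob_space \<mu>0 by fact
  let ?Q = "measure_pmf (pmf_of_set {0..<2 * int p})"
  have sfQ: "sigma_finite_measure ?Q"
    by (rule prob_space_imp_sigma_finite) (rule prob_space_measure_pmf)
  define B where "B = {\<omega> \<in> space \<mu>0. \<forall>j. \<omega> j = -1}"
  have sp: "space \<mu>0 = (\<Pi>\<^sub>E j\<in>UNIV. {-1, 1})"
    using assms(3) by (simp add: Omega_M_def space_PiM)
  have Bs: "B \<in> sets \<mu>0"
  proof -
    have "{\<omega> \<in> space Omega_M. \<forall>j. \<omega> j = -1} \<in> sets Omega_M"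
      unfolding Omega_M_def by measurable
    then show ?thesis using assms(2,3) by (simp add: B_def)
  qed
  have A0s: "{\<omega> \<in> space \<mu>0. \<omega> 0 = -1} \<in> sets \<mu>0"
  proof -
    have "{\<omega> \<in> space Omega_M. \<omega> 0 = -1} \<in> sets Omega_M"
      unfolding Omega_M_def by measurable
    then show ?thesis using assms(2,3) by simp
  qed
  have shm: "shift \<in> measurable \<mu>0 \<mu>0" using assms(4) by (simp add: shift_invariant_def)
  have "shift -` B \<inter> space \<mu>0 = B"
  proof (intro equalityI subsetI)
    fix \<omega> assume "\<omega> \<in> shift -` B \<inter> space \<mu>0"
    then have "\<forall>j. \<omega> (j + 1) = -1" "\<omega> \<in> space \<mu>0" by (auto simp: B_def shift_def)
    then have "\<forall>j. \<omega> j = -1" by (metis diff_add_cancel)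
    then show "\<omega> \<in> B" using \<open>\<omega> \<in> space \<mu>0\<close> by (simp add: B_def)
  next
    fix \<omega> assume "\<omega> \<in> B"
    then have "\<omega> \<in> space \<mu>0" by (simp add: B_def)
    then have "shift \<omega> \<in> space \<mu>0" "\<omega> \<in> space \<mu>0" using measurable_space[OF shm] by auto
    then show "\<omega> \<in> shift -` B \<inter> space \<mu>0" using \<open>\<omega> \<in> B\<close> by (auto simp: B_def shift_def)
  qed
  then have "measure \<mu>0 B = 0 \<or> measure \<mu>0 B = 1"
    using assms(5) Bs by (simp add: shift_ergodic_def)
  moreover have "measure \<mu>0 B \<le> measure \<mu>0 {\<omega> \<in> space \<mu>0. \<omega> 0 = -1}"
    by (rule P.finite_measure_mono[OF _ A0s]) (auto simp: B_def)
  ultimately have "measure \<mu>0 B = 0" using assms(8) by auto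
  then have Bn: "B \<in> null_sets \<mu>0" using Bs by (simp add: P.emeasure_eq_measure null_sets_def)
  have N: "B \<times> space ?Q \<in> null_sets (\<mu>0 \<Otimes>\<^sub>M ?Q)"
    by (rule sigma_finite_measure.times_in_null_sets1[OF sfQ Bn]) simp
  show ?thesis
  proof (rule AE_I'[OF N])
    show "{x \<in> space (\<mu>0 \<Otimes>\<^sub>M ?Q). \<not> (\<forall>k\<in>{1..p}. infdist (complex_of_real (2 * cos (pi * real k / (real p + 1))))
                     (spec_l2 (polymer_H p v (fst x) (snd x))) \<le> 18 * real k / real p powr (3/2))}
          \<subseteq> B \<times> space ?Q"
    proof (rule subsetI)
      fix x assume x: "x \<in> {x \<in> space (\<mu>0 \<Otimes>\<^sub>M ?Q). \<not> (\<forall>k\<in>{1..p}. infdist (complex_of_real (2 * cos (pi * real k / (real p + 1))))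
                     (spec_l2 (polymer_H p v (fst x) (snd x))) \<le> 18 * real k / real p powr (3/2))}"
      then have xs: "fst x \<in> space \<mu>0" "snd x \<in> space ?Q" by (auto simp: space_pair_measure)
      have "\<forall>j. fst x j = -1"
      proof
        fix j
        show "fst x j = -1"
        proof (rule ccontr)
          assume "fst x j \<noteq> -1"
          then have "fst x j = 1" using xs(1) sp by (auto simp: PiE_def Pi_def)
          then have "\<forall>k\<in>{1..p}. infdist (complex_of_real (2 * cos (pi * real k / (real p + 1))))
                     (spec_l2 (polymer_H p v (fst x) (snd x))) \<le> 18 * real k / real p powr (3/2)"
            using main_omega[OF assms(6)] by auto
          then show False using x by auto
        qed
      qed
      then have "fst x \<in> B" using xs by (simp add: B_def)
      then show "x \<in> B \<times> space ?Q" using xs by (cases x) auto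
    qed
  qed
qed


end
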